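(* Let $\phi:[0,1]\to\mathbb{C}$ be continuous with $\phi(0)=\phi(1)=1$ and $\hat\phi\in\ell^1(\mathbb{Z})$ (regarded as a function on $\mathbb{R}/\mathbb{Z}$). Let $m,\mathfrak{m}\in\mathbb{N}$, $N\ge\mathfrak{m}$, and define for $k\in\mathbb{Z}$ $$\mu(k)=\sum_{l\in k-B_N}\hat\phi(l),\qquad \nu(k)=\sum_{l\notin k-B_N}\hat\phi(l).$$ For $\mathfrak{m}$-Fourier bandlimited $f\in L^2([0,1];\mathbb{C}^m)$ define $$\mathcal{R}_\phi f(x)=\sum_{j=0}^{2N-1}f(j/2N)\,s_N(x-j/2N)\,\phi(x-j/2N),\qquad x\in[0,1],$$ with arguments taken modulo $1$. Then $$\hat f(k)-\widehat{\mathcal{R}_\phi f}(k)=\begin{cases}\hat f(k)\nu(k), & k\in B_{\mathfrak{m}},\\ -\hat f(k-2lN)\mu(k), & \text{if there is } l\ne0 \text{ with } k-2lN\in B_{\mathfrak{m}},\\ 0,&\text{otherwise}.\end{cases}$$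
   Context: $B_N=\{-N,\dots,N-1\}$ and $k-B_N=\{k-b:b\in B_N\}$. $\hat g(k)=\int_0^1 g(x)e^{-i2\pi kx}dx$. $f$ is $\mathfrak{m}$-Fourier bandlimited if $\hat f(k)=0$ for $k\notin B_{\mathfrak{m}}$ (identified with its continuous $1$-periodic representative). $s_N(x)=\frac1{2N}\sum_{k=-N}^{N-1}e^{i2\pi kx}$. *)

theory Defs
  imports "HOL-Analysis.Analysis"
begin

definition Bset :: "nat \<Rightarrow> int set" where
  "Bset N = {- int N ..< int N}"

definition fcoeff :: "(real \<Rightarrow> complex) \<Rightarrow> int \<Rightarrow> complex" where
  "fcoeff g k = integral {0..1} (\<lambda>x. g x * exp (- (\<i> * complex_of_real (2 * pi * real_of_int k * x))))"

definition fcoeff_vec :: "(real \<Rightarrow> complex ^ 'm) \<Rightarrow> int \<Rightarrow> complex ^ 'm" where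
  "fcoeff_vec g k = (\<chi> i. fcoeff (\<lambda>x. g x $ i) k)"

text \<open>Bandlimited: the continuous 1-periodic representative, Fourier coefficients vanish outside B_mm\<close>
definition bandlimited :: "nat \<Rightarrow> (real \<Rightarrow> complex ^ 'm) \<Rightarrow> bool" where
  "bandlimited mm f \<longleftrightarrow> continuous_on UNIV f \<and> (\<forall>x. f (x + 1) = f x)
      \<and> (\<forall>k. k \<notin> Bset mm \<longrightarrow> fcoeff_vec f k = 0)"

definition sN :: "nat \<Rightarrow> real \<Rightarrow> complex" where
  "sN N x = (1 / (2 * of_nat N)) * (\<Sum>k\<in>Bset N. exp (\<i> * complex_of_real (2 * pi * real_of_int k * x)))"

definition mu :: "(real \<Rightarrow> complex) \<Rightarrow> nat \<Rightarrow> int \<Rightarrow> complex" where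
  "mu phi N k = (\<Sum>l\<in>(\<lambda>b. k - b) ` Bset N. fcoeff phi l)"

definition nu :: "(real \<Rightarrow> complex) \<Rightarrow> nat \<Rightarrow> int \<Rightarrow> complex" where
  "nu phi N k = (\<Sum>\<^sub>\<infinity>l\<in>UNIV - (\<lambda>b. k - b) ` Bset N. fcoeff phi l)"

definition Rphi :: "(real \<Rightarrow> complex) \<Rightarrow> nat \<Rightarrow> (real \<Rightarrow> complex ^ 'm) \<Rightarrow> real \<Rightarrow> complex ^ 'm" where
  "Rphi phi N f x = (\<Sum>j<2*N. (sN N (frac (x - real j / (2 * real N))) * phi (frac (x - real j / (2 * real N))))
                                  *s f (real j / (2 * real N)))"

end

theory Submission
  imports Defs
begin


definition ee :: "int \<Rightarrow> real \<Rightarrow> complex" where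
  "ee k x = exp (\<i> * complex_of_real (2 * pi * real_of_int k * x))"

lemma ee_neg: "exp (- (\<i> * complex_of_real (2 * pi * real_of_int k * x))) = ee (-k) x"
  unfolding ee_def by (simp add: algebra_simps)

lemma fcoeff_ee: "fcoeff g k = integral {0..1} (\<lambda>x. g x * ee (-k) x)"
  unfolding fcoeff_def ee_neg ..

lemma ee_freq_add: "ee (a + b) x = ee a x * ee b x"
  unfolding ee_def by (simp add: algebra_simps exp_add[symmetric])

lemma ee_arg_add: "ee k (x + y) = ee k x * ee k y"
  unfolding ee_def by (simp add: algebra_simps exp_add[symmetric])

lemma ee_arg_diff: "ee k (x - y) = ee k x * ee (-k) y"
  unfolding ee_def by (simp add: algebra_simps exp_add[symmetric])

lemma ee_zero_freq[simp]: "ee 0 x = 1" unfolding ee_def by simp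

lemma ee_int: "ee k (real_of_int n) = 1"
proof -
  have "\<i> * complex_of_real (2 * pi * real_of_int k * real_of_int n) = 2 * pi * \<i> * of_int (k * n)"
    by (simp add: algebra_simps)
  then show ?thesis unfolding ee_def by (simp only: exp_eq_1) (simp add: algebra_simps, metis of_int_mult)
qed

lemma norm_ee[simp]: "norm (ee k x) = 1"
  unfolding ee_def by (simp add: norm_exp_i_times)

lemma cnj_ee: "cnj (ee k x) = ee (-k) x"
  unfolding ee_def by (simp add: exp_cnj algebra_simps)

lemma continuous_on_ee[continuous_intros]: "continuous_on S (ee k)"
  unfolding ee_def by (intro continuous_intros)

lemma ee_alt: "ee n x = exp ((2 * pi * \<i> * of_int n) * of_real x)"
  unfolding ee_def by (simp add: algebra_simps)

lemma ee_deriv: "((ee n) has_vector_derivative (2 * pi * \<i> * of_int n * ee n x)) (at x within S)"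
proof -
  let ?c = "2 * pi * \<i> * of_int n"
  have "((\<lambda>z. exp (?c * z)) has_field_derivative ?c * exp (?c * of_real x)) (at (of_real x))"
    by (auto intro!: derivative_eq_intros)
  from has_vector_derivative_real_field[OF this, of S] show ?thesis
    unfolding ee_alt[abs_def] ee_alt by simp
qed

lemma ee_integral: "(ee n has_integral (if n = 0 then 1 else 0)) {0..1}"
proof (cases "n = 0")
  case True then have "ee n = (\<lambda>x. 1)" by (simp add: fun_eq_iff)
  then show ?thesis using has_integral_const_real[of 1 0 1] True by simp
next
  case False
  let ?c = "2 * pi * \<i> * of_int n"
  have c: "?c \<noteq> 0" using False by simp
  have "((\<lambda>x. ee n x / ?c) has_vector_derivative ee n x) (at x within {0..1})" for x
    using has_vector_derivative_divide[OF ee_deriv[of n x "{0..1}"], of ?c] c by simp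
  from fundamental_theorem_of_calculus[OF _ this] have
    "(ee n has_integral ee n 1 / ?c - ee n 0 / ?c) {0..1}" by simp
  moreover have "ee n 1 = 1" "ee n 0 = 1" using ee_int[of n 1] ee_int[of n 0] by auto
  ultimately show ?thesis using False by simp
qed

lemma infsum_split_finite:
  fixes f :: "'a \<Rightarrow> 'b::banach"
  assumes "f summable_on UNIV" "finite X"
  shows "infsum f UNIV = sum f X + infsum f (UNIV - X)"
proof -
  have "infsum f (X \<union> (UNIV - X)) = infsum f X + infsum f (UNIV - X)"
    by (rule infsum_Un_disjoint) (use assms summable_on_subset_banach in auto)
  then show ?thesis using assms by simp
qed

lemma abs_summable_ee:
  assumes c: "(\<lambda>l. norm (c l)) summable_on UNIV"
  shows "(\<lambda>l. c l * ee l x) summable_on A" "(\<lambda>l. norm (c l * ee l x)) summable_on A"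
proof -
  have "(\<lambda>l. norm (c l * ee l x)) summable_on UNIV" using c by (simp add: norm_mult)
  then show "(\<lambda>l. norm (c l * ee l x)) summable_on A" by (rule summable_on_subset) auto
  then show "(\<lambda>l. c l * ee l x) summable_on A" by (rule abs_summable_summable)
qed

definition ser :: "(int \<Rightarrow> complex) \<Rightarrow> real \<Rightarrow> complex" where
  "ser c x = (\<Sum>\<^sub>\<infinity>l. c l * ee l x)"

lemma ser_uniform:
  assumes c: "(\<lambda>l. norm (c l)) summable_on UNIV"
    and w: "\<And>x. norm (w x) \<le> 1"
  shows "uniform_limit UNIV (\<lambda>X x. (\<Sum>l\<in>X. c l * ee l x) * w x) (\<lambda>x. ser c x * w x)
           (finite_subsets_at_top UNIV)"
proof (rule uniform_limitI)
  fix e :: real assume e: "0 < e"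
  define A where "A = (\<Sum>\<^sub>\<infinity>l. norm (c l))"
  have "((\<lambda>l. norm (c l)) has_sum A) UNIV" using c A_def by simp
  then have "((\<lambda>X. \<Sum>l\<in>X. norm (c l)) \<longlongrightarrow> A) (finite_subsets_at_top UNIV)"
    by (simp add: has_sum_def)
  then have ev: "\<forall>\<^sub>F X in finite_subsets_at_top UNIV. dist (\<Sum>l\<in>X. norm (c l)) A < e"
    using e by (rule tendstoD)
  have fin: "\<forall>\<^sub>F X in finite_subsets_at_top UNIV. finite X" by auto
  show "\<forall>\<^sub>F X in finite_subsets_at_top UNIV. \<forall>x\<in>UNIV.
          dist ((\<Sum>l\<in>X. c l * ee l x) * w x) (ser c x * w x) < e"
    using eventually_conj[OF ev fin]
  proof (rule eventually_mono, safe)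
    fix X x assume d: "dist (\<Sum>l\<in>X. norm (c l)) A < e" and X: "finite X"
    have sp: "A = (\<Sum>l\<in>X. norm (c l)) + (\<Sum>\<^sub>\<infinity>l\<in>UNIV - X. norm (c l))"
      unfolding A_def by (rule infsum_split_finite[OF c X])
    have sx: "ser c x = (\<Sum>l\<in>X. c l * ee l x) + (\<Sum>\<^sub>\<infinity>l\<in>UNIV - X. c l * ee l x)"
      unfolding ser_def by (rule infsum_split_finite[OF abs_summable_ee(1)[OF c] X])
    have "norm (\<Sum>\<^sub>\<infinity>l\<in>UNIV - X. c l * ee l x) \<le> (\<Sum>\<^sub>\<infinity>l\<in>UNIV - X. norm (c l * ee l x))"
      by (rule norm_infsum_bound) (use abs_summable_ee(2)[OF c] in auto)
    also have "\<dots> = (\<Sum>\<^sub>\<infinity>l\<in>UNIV - X. norm (c l))" by (simp add: norm_mult)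
    also have "\<dots> < e" using d sp by (simp add: dist_real_def)
    finally have lt: "norm (\<Sum>\<^sub>\<infinity>l\<in>UNIV - X. c l * ee l x) < e" .
    have "dist ((\<Sum>l\<in>X. c l * ee l x) * w x) (ser c x * w x)
        = norm (\<Sum>\<^sub>\<infinity>l\<in>UNIV - X. c l * ee l x) * norm (w x)"
      by (simp add: dist_norm sx algebra_simps norm_mult flip: norm_minus_commute)
    also have "\<dots> \<le> norm (\<Sum>\<^sub>\<infinity>l\<in>UNIV - X. c l * ee l x)"
      using w[of x] by (simp add: mult_left_le)
    finally show "dist ((\<Sum>l\<in>X. c l * ee l x) * w x) (ser c x * w x) < e" using lt by simp
  qed
qed

lemma ser_continuous:
  assumes c: "(\<lambda>l. norm (c l)) summable_on UNIV"
  shows "continuous_on UNIV (ser c)"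
proof -
  have "continuous_on UNIV (\<lambda>x. ser c x * 1)"
    by (rule uniform_limit_theorem[OF _ ser_uniform[OF c, of "\<lambda>_. 1"]])
       (auto intro!: continuous_intros)
  then show ?thesis by simp
qed

lemma ser_periodic:
  "ser c (x + real_of_int n) = ser c x"
  unfolding ser_def by (simp add: ee_arg_add ee_int)

lemma ser_fcoeff:
  assumes c: "(\<lambda>l. norm (c l)) summable_on UNIV"
  shows "fcoeff (ser c) k = c k"
proof -
  have u: "uniform_limit {0..1} (\<lambda>X x. (\<Sum>l\<in>X. c l * ee l x) * ee (-k) x)
              (\<lambda>x. ser c x * ee (-k) x) (finite_subsets_at_top UNIV)"
    by (rule uniform_limit_on_subset[OF ser_uniform[OF c]]) auto
  obtain I J where I: "\<And>X. ((\<lambda>x. (\<Sum>l\<in>X. c l * ee l x) * ee (-k) x) has_integral I X) {0..1}"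
    and J: "((\<lambda>x. ser c x * ee (-k) x) has_integral J) {0..1}"
    and IJ: "(I \<longlongrightarrow> J) (finite_subsets_at_top UNIV)"
    by (rule uniform_limit_integral[OF u]) (auto intro!: continuous_intros)
  have IX: "I X = (if k \<in> X then c k else 0)" if X: "finite X" for X
  proof -
    have H: "((\<lambda>x. (\<Sum>l\<in>X. c l * ee l x) * ee (-k) x) has_integral
           (\<Sum>l\<in>X. c l * (if l - k = 0 then 1 else 0))) {0..1}"
      unfolding sum_distrib_right
      apply (rule has_integral_sum[OF X])
      subgoal for l
        using has_integral_mult_right[OF ee_integral, of "c l" "l - k"]
        by (simp add: mult.assoc ee_freq_add[symmetric] del: ee_zero_freq)
      done
    moreover have "(\<Sum>l\<in>X. c l * (if l - k = 0 then 1 else 0)) = (if k \<in> X then c k else 0)"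
    proof -
      have "(\<lambda>l. c l * (if l - k = 0 then 1 else 0)) = (\<lambda>l. if l = k then c l else 0)" by (rule ext) simp
      then show ?thesis using X by (simp only: sum.delta)
    qed
    ultimately show ?thesis using has_integral_unique[OF I[of X] H] by simp
  qed
  have "\<forall>\<^sub>F X in finite_subsets_at_top UNIV. I X = c k"
    unfolding eventually_finite_subsets_at_top
  proof (rule exI[of _ "{k}"], intro conjI allI impI)
    fix Y :: "int set" assume "finite Y \<and> {k} \<subseteq> Y \<and> Y \<subseteq> UNIV"
    then show "I Y = c k" using IX[of Y] by simp
  qed simp_all
  then have "(I \<longlongrightarrow> c k) (finite_subsets_at_top UNIV)"
    by (rule tendsto_eventually)
  then have "J = c k" using tendsto_unique[OF finite_subsets_at_top_neq_bot IJ] by simp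
  then show ?thesis using J unfolding fcoeff_ee by (simp add: integral_unique)
qed



definition tp :: "(real \<Rightarrow> complex) \<Rightarrow> bool" where
  "tp F \<longleftrightarrow> (\<exists>L. \<forall>t. F t = (\<Sum>(a,k)\<leftarrow>L. a * ee k t))"

lemma tp_const: "tp (\<lambda>t. c)"
  unfolding tp_def by (rule exI[of _ "[(c,0)]"]) simp

lemma tp_ee: "tp (\<lambda>t. c * ee k t)"
  unfolding tp_def by (rule exI[of _ "[(c,k)]"]) simp

lemma tp_add: "tp F \<Longrightarrow> tp G \<Longrightarrow> tp (\<lambda>t. F t + G t)"
  unfolding tp_def
proof (elim exE)
  fix L1 L2 assume 1: "\<forall>t. F t = (\<Sum>(a,k)\<leftarrow>L1. a * ee k t)" and 2: "\<forall>t. G t = (\<Sum>(a,k)\<leftarrow>L2. a * ee k t)"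
  show "\<exists>L. \<forall>t. F t + G t = (\<Sum>(a,k)\<leftarrow>L. a * ee k t)"
    by (rule exI[of _ "L1 @ L2"]) (simp add: 1 2)
qed

lemma tp_mult_aux:
  "(\<Sum>(a,k)\<leftarrow>L1. a * ee k t) * (\<Sum>(a,k)\<leftarrow>L2. a * ee k t)
   = (\<Sum>(a,k)\<leftarrow>concat (map (\<lambda>(a,k). map (\<lambda>(b,m). (a*b, k+m)) L2) L1). a * ee k t)"
proof (induction L1)
  case Nil then show ?case by simp
next
  case (Cons x L1)
  obtain a k where x: "x = (a,k)" by (cases x)
  have "a * ee k t * (\<Sum>(b,m)\<leftarrow>L2. b * ee m t) = (\<Sum>(b,m)\<leftarrow>L2. a * b * ee (k + m) t)"
    by (induction L2) (auto simp: algebra_simps ee_freq_add)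
  then show ?case using Cons by (simp add: x distrib_right o_def case_prod_unfold)
qed

lemma tp_mult: "tp F \<Longrightarrow> tp G \<Longrightarrow> tp (\<lambda>t. F t * G t)"
  unfolding tp_def
proof (elim exE)
  fix L1 L2 assume 1: "\<forall>t. F t = (\<Sum>(a,k)\<leftarrow>L1. a * ee k t)" and 2: "\<forall>t. G t = (\<Sum>(a,k)\<leftarrow>L2. a * ee k t)"
  show "\<exists>L. \<forall>t. F t * G t = (\<Sum>(a,k)\<leftarrow>L. a * ee k t)"
    by (rule exI, simp only: 1 2 tp_mult_aux, rule allI, rule refl)
qed

lemma tp_cnj: "tp F \<Longrightarrow> tp (\<lambda>t. cnj (F t))"
  unfolding tp_def
proof (elim exE)
  fix L assume 1: "\<forall>t. F t = (\<Sum>(a,k)\<leftarrow>L. a * ee k t)"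
  have "cnj (\<Sum>(a,k)\<leftarrow>L. a * ee k t) = (\<Sum>(a,k)\<leftarrow>map (\<lambda>(a,k). (cnj a, -k)) L. a * ee k t)" for t
    by (induction L) (auto simp: cnj_ee)
  then show "\<exists>L. \<forall>t. cnj (F t) = (\<Sum>(a,k)\<leftarrow>L. a * ee k t)" using 1 by metis
qed

lemma tp_orth:
  assumes g: "continuous_on {0..1} g" and z: "\<And>k. fcoeff g k = 0" and F: "tp F"
  shows "((\<lambda>t. g t * cnj (F t)) has_integral 0) {0..1}"
proof -
  obtain L where L: "\<forall>t. cnj (F t) = (\<Sum>(a,k)\<leftarrow>L. a * ee k t)"
    using tp_cnj[OF F] unfolding tp_def by blast
  have "((\<lambda>t. g t * (\<Sum>(a,k)\<leftarrow>L. a * ee k t)) has_integral 0) {0..1}"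
  proof (induction L)
    case Nil then show ?case by simp
  next
    case (Cons x L)
    obtain a k where x: "x = (a,k)" by (cases x)
    have i: "(\<lambda>t. g t * ee k t) integrable_on {0..1}"
      by (rule integrable_continuous_interval) (intro continuous_intros g)
    have "integral {0..1} (\<lambda>t. g t * ee k t) = 0" using z[of "-k"] unfolding fcoeff_ee by simp
    with i have "((\<lambda>t. g t * ee k t) has_integral 0) {0..1}"
      using has_integral_integral by metis
    from has_integral_mult_right[OF this, of a]
    have "((\<lambda>t. a * (g t * ee k t)) has_integral 0) {0..1}" by simp
    from has_integral_add[OF this Cons.IH] show ?case
      by (simp add: x algebra_simps)
  qed
  then show ?thesis using L by simp
qed



lemma linear_complex_decomp:
  assumes "bounded_linear q"
  shows "q z = Re z * q 1 + Im z * q \<i>"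
proof -
  interpret q: bounded_linear q by fact
  have "z = Re z *\<^sub>R 1 + Im z *\<^sub>R \<i>" by (simp add: complex_eq_iff)
  then have "q z = q (Re z *\<^sub>R 1 + Im z *\<^sub>R \<i>)" by simp
  also have "\<dots> = Re z * q 1 + Im z * q \<i>" by (simp add: q.add q.scaleR)
  finally show ?thesis .
qed

lemma rpf_tp:
  assumes "real_polynomial_function q"
  shows "tp (\<lambda>t. complex_of_real (q (ee 1 t)))"
  using assms
proof (induction q rule: real_polynomial_function.induct)
  case (linear q)
  have re: "complex_of_real (Re (ee 1 t)) = (ee 1 t + ee (-1) t) / 2" for t
    using complex_add_cnj[of "ee 1 t"] by (simp add: cnj_ee)
  have im: "complex_of_real (Im (ee 1 t)) = (ee 1 t - ee (-1) t) / (2 * \<i>)" for t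
    using complex_diff_cnj[of "ee 1 t"] by (simp add: cnj_ee field_simps)
  have "complex_of_real (q (ee 1 t)) =
     ((q 1 - \<i> * q \<i>) / 2) * ee 1 t + ((q 1 + \<i> * q \<i>) / 2) * ee (-1) t" for t
  proof -
    have "complex_of_real (q (ee 1 t)) = complex_of_real (Re (ee 1 t)) * complex_of_real (q 1) + complex_of_real (Im (ee 1 t)) * complex_of_real (q \<i>)"
      using linear_complex_decomp[OF linear, of "ee 1 t"] by simp
    also have "\<dots> = ((q 1 - \<i> * q \<i>) / 2) * ee 1 t + ((q 1 + \<i> * q \<i>) / 2) * ee (-1) t"
      unfolding re im by (simp add: field_simps)
    finally show ?thesis .
  qed
  then show ?case
    using tp_add[OF tp_ee tp_ee, of "(q 1 - \<i> * q \<i>) / 2" 1 "(q 1 + \<i> * q \<i>) / 2" "-1"]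
    by presburger
next
  case (const c) then show ?case using tp_const by simp
next
  case (add f g) then show ?case using tp_add by simp
next
  case (mult f g) then show ?case using tp_mult by simp
qed

lemma pf_tp:
  fixes p :: "complex \<Rightarrow> complex"
  assumes "polynomial_function p"
  shows "tp (\<lambda>t. p (ee 1 t))"
proof -
  have r: "real_polynomial_function (Re \<circ> p)" "real_polynomial_function (Im \<circ> p)"
    using assms unfolding polynomial_function_def
    by (auto intro: bounded_linear_Re bounded_linear_Im)
  have "tp (\<lambda>t. complex_of_real ((Re \<circ> p) (ee 1 t)) + complex_of_real ((Im \<circ> p) (ee 1 t)) * \<i>)"
    by (intro tp_add tp_mult rpf_tp r tp_const)
  moreover have "complex_of_real ((Re \<circ> p) z) + complex_of_real ((Im \<circ> p) z) * \<i> = p z" for z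
    by (simp add: complex_eq_iff)
  ultimately show ?thesis by simp
qed



lemma frac_shift:
  assumes g01: "g 0 = g 1" and y: "of_int m \<le> y" "y \<le> of_int m + 1"
  shows "g (frac y) = g (y - of_int m)"
proof (cases "y < of_int m + 1")
  case True
  then have "floor y = m" using y by (simp add: floor_eq_iff)
  then show ?thesis by (simp add: frac_def)
next
  case False
  then have "y = of_int (m + 1)" using y by simp
  then show ?thesis using g01 by simp
qed

lemma G_cont:
  fixes g :: "real \<Rightarrow> complex"
  assumes g: "continuous_on {0..1} g" and g01: "g 0 = g 1"
  shows "continuous_on UNIV (\<lambda>x. g (frac x))"
proof -
  have seg: "continuous_on {of_int m..of_int m + 1} (\<lambda>x. g (frac x))" for m :: int
  proof -
    have "continuous_on {of_int m..of_int m + 1} (\<lambda>x. g (x - of_int m))"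
      by (rule continuous_on_compose2[OF g]) (auto intro!: continuous_intros)
    then show ?thesis
      by (rule continuous_on_eq) (use frac_shift[OF g01] in auto)
  qed
  show ?thesis
  proof (rule continuous_at_imp_continuous_on, rule ballI)
    fix x :: real
    define n where "n = floor x"
    have "continuous_on ({of_int (n - 1)..of_int (n-1) + 1} \<union> {of_int n..of_int n + 1}) (\<lambda>x. g (frac x))"
      by (rule continuous_on_closed_Un) (use seg[of "n-1"] seg[of n] in auto)
    moreover have "{of_int (n - 1)..of_int (n-1) + 1} \<union> {of_int n..of_int n + 1} = {real_of_int n - 1..of_int n + 1}"
      by auto
    ultimately have "continuous_on {real_of_int n - 1..of_int n + 1} (\<lambda>x. g (frac x))" by simp
    moreover have "x \<in> interior {real_of_int n - 1..of_int n + 1}"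
      using n_def by simp linarith
    ultimately show "isCont (\<lambda>x. g (frac x)) x" by (rule continuous_on_interior)
  qed
qed

lemma Arg_Arg2pi:
  assumes "w \<noteq> 0"
  shows "\<exists>n::int. Arg w = Arg2pi w + 2 * pi * of_int n"
proof -
  have S1: "sgn w = cis (Arg w)" using Arg_correct[OF assms] by simp
  have "w = of_real (norm w) * exp (\<i> * of_real (Arg2pi w))"
    using Arg2pi[of w] unfolding is_Arg_def by simp
  then have "w / of_real (norm w) = (of_real (norm w) * exp (\<i> * of_real (Arg2pi w))) / of_real (norm w)"
    by (rule arg_cong[where f = "\<lambda>u. u / of_real (norm w)"])
  also have "\<dots> = exp (\<i> * of_real (Arg2pi w))" using assms by simp
  finally have "w / of_real (norm w) = exp (\<i> * of_real (Arg2pi w))" .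
  moreover have "sgn w = w / of_real (norm w)"
    by (simp add: sgn_div_norm scaleR_conv_of_real divide_inverse mult.commute)
  ultimately have "sgn w = exp (\<i> * of_real (Arg2pi w))" by simp
  with S1 have "exp (\<i> * of_real (Arg w)) = exp (\<i> * of_real (Arg2pi w))"
    by (simp add: cis_conv_exp)
  then have "exp (\<i> * of_real (Arg w) - \<i> * of_real (Arg2pi w)) = 1"
    by (simp add: exp_diff)
  then obtain n :: int where "Arg w - Arg2pi w = of_int (2 * n) * pi"
    unfolding exp_eq_1 by auto
  then show ?thesis by (intro exI[of _ n]) (simp add: algebra_simps)
qed



lemma h_cont:
  fixes G :: "real \<Rightarrow> complex"
  assumes G: "continuous_on UNIV G" and per: "\<And>x n. G (x + real_of_int n) = G x"
  shows "continuous_on (sphere 0 1) (\<lambda>z. G (Arg2pi z / (2*pi)))"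
proof (rule continuous_at_imp_continuous_on, rule ballI)
  fix z :: complex assume z: "z \<in> sphere 0 1"
  have Gc: "isCont G x" for x using G by (simp add: continuous_on_eq_continuous_at)
  show "isCont (\<lambda>z. G (Arg2pi z / (2*pi))) z"
  proof (cases "z \<in> \<real>\<^sub>\<ge>\<^sub>0")
    case False
    have "isCont (\<lambda>z. Arg2pi z / (2*pi)) z"
      by (intro continuous_intros continuous_at_Arg2pi False) simp
    then show ?thesis by (rule isCont_o2[OF _ Gc])
  next
    case True
    then have "z = 1" using z
      by (auto simp: complex_nonneg_Reals_iff complex_eq_iff cmod_def)
    then have z0: "z \<notin> \<real>\<^sub>\<le>\<^sub>0" "z \<noteq> 0" by (auto simp: complex_nonpos_Reals_iff)
    have "isCont (\<lambda>z. Arg z / (2*pi)) z"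
      by (intro continuous_intros continuous_at_Arg z0) simp
    then have c: "isCont (\<lambda>z. G (Arg z / (2*pi))) z" by (rule isCont_o2[OF _ Gc])
    have ev: "\<forall>\<^sub>F w in nhds z. G (Arg w / (2*pi)) = G (Arg2pi w / (2*pi))"
      unfolding eventually_nhds
    proof (intro exI[of _ "-{0}"] conjI ballI)
      fix w :: complex assume "w \<in> -{0}"
      then obtain n :: int where "Arg w = Arg2pi w + 2 * pi * of_int n"
        using Arg_Arg2pi by auto
      then have "Arg w / (2*pi) = Arg2pi w / (2*pi) + of_int n" by (simp add: field_simps)
      then show "G (Arg w / (2*pi)) = G (Arg2pi w / (2*pi))" using per by simp
    qed (use z0 in auto)
    show ?thesis using isCont_cong[OF ev] c by simp
  qed
qed

lemma h_on_circle:
  assumes g01: "g 0 = g 1" and t: "t \<in> {0..1}"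
  shows "g (frac (Arg2pi (ee 1 t) / (2*pi))) = g t"
proof (cases "t < 1")
  case True
  have "Arg2pi (ee 1 t) = 2 * pi * t"
    unfolding ee_def using True t by (subst Arg2pi_exp) auto
  then show ?thesis using True t by (simp add: frac_eq)
next
  case False
  then have "t = 1" using t by simp
  moreover have "ee 1 1 = 1" using ee_int[of 1 1] by simp
  moreover have "Arg2pi 1 = 0" by (subst Arg2pi_eq_0) simp
  ultimately show ?thesis using g01 by simp
qed

lemma tp_approx:
  fixes g :: "real \<Rightarrow> complex"
  assumes g: "continuous_on {0..1} g" and g01: "g 0 = g 1" and e: "e > 0"
  shows "\<exists>P. tp P \<and> (\<forall>t\<in>{0..1}. norm (g t - P t) < e)"
proof -
  define G where "G = (\<lambda>x. g (frac x))"
  have Gc: "continuous_on UNIV G" unfolding G_def by (rule G_cont[OF g g01])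
  have per: "G (x + real_of_int n) = G x" for x n unfolding G_def by simp
  obtain p where p: "polynomial_function p" and pa: "\<forall>z\<in>sphere 0 1. norm (G (Arg2pi z / (2*pi)) - p z) < e"
    using Stone_Weierstrass_polynomial_function[OF compact_sphere h_cont[OF Gc per] e] by blast
  show ?thesis
  proof (intro exI[of _ "\<lambda>t. p (ee 1 t)"] conjI ballI)
    show "tp (\<lambda>t. p (ee 1 t))" by (rule pf_tp[OF p])
    fix t :: real assume t: "t \<in> {0..1}"
    have "ee 1 t \<in> sphere 0 1" by simp
    with pa have "norm (G (Arg2pi (ee 1 t) / (2*pi)) - p (ee 1 t)) < e" by blast
    then show "norm (g t - p (ee 1 t)) < e" using h_on_circle[OF g01 t] by (simp add: G_def)
  qed
qed

theorem fourier_unique: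
  fixes g :: "real \<Rightarrow> complex"
  assumes g: "continuous_on {0..1} g" and g01: "g 0 = g 1" and z: "\<And>k. fcoeff g k = 0"
    and t: "t \<in> {0..1}"
  shows "g t = 0"
proof -
  obtain M where M: "M > 0" "\<And>t. t \<in> {0..1} \<Longrightarrow> norm (g t) \<le> M"
    using compact_imp_bounded[OF compact_continuous_image[OF g compact_Icc]]
    unfolding bounded_pos by auto
  define Q where "Q = integral {0..1} (\<lambda>t. g t * cnj (g t))"
  have Qi: "((\<lambda>t. g t * cnj (g t)) has_integral Q) {0..1}"
    unfolding Q_def by (intro integrable_integral integrable_continuous_interval continuous_intros g)
  have Qb: "norm Q \<le> M * e" if e: "e > 0" for e
  proof -
    obtain P where P: "tp P" and Pa: "\<forall>t\<in>{0..1}. norm (g t - P t) < e"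
      using tp_approx[OF g g01 e] by blast
    have "((\<lambda>t. g t * cnj (g t) - g t * cnj (P t)) has_integral Q - 0) {0..1}"
      by (rule has_integral_diff[OF Qi tp_orth[OF g z P]])
    then have H: "((\<lambda>t. g t * cnj (g t) - g t * cnj (P t)) has_integral Q) (cbox 0 1)" by simp
    have B: "norm (g x * cnj (g x) - g x * cnj (P x)) \<le> M * e" if "x \<in> cbox 0 1" for x
    proof -
      from that have x: "x \<in> {0..1}" by simp
      have "norm (g x * cnj (g x) - g x * cnj (P x)) = norm (g x) * norm (g x - P x)"
        by (simp add: norm_mult flip: right_diff_distrib complex_cnj_diff)
      also have "\<dots> \<le> M * e"
        using M(2)[OF x] Pa x M(1) by (intro mult_mono) (auto simp: less_imp_le)
      finally show ?thesis .
    qed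
    from has_integral_bound[OF _ H B] show ?thesis using M e by simp
  qed
  have Q0: "Q = 0"
  proof (rule ccontr)
    assume "Q \<noteq> 0"
    then have "norm Q > 0" by simp
    with Qb[of "norm Q / (2 * M)"] M show False by (simp add: field_simps)
  qed
  define R where "R = (\<lambda>t. (norm (g t))^2)"
  have Rc: "continuous_on {0..1} R" unfolding R_def by (intro continuous_intros g)
  have Ri: "(R has_integral integral {0..1} R) {0..1}"
    by (intro integrable_integral integrable_continuous_interval Rc)
  have "((\<lambda>t. complex_of_real (R t)) has_integral of_real (integral {0..1} R)) {0..1}"
    by (rule has_integral_of_real[OF Ri])
  moreover have "(\<lambda>t. complex_of_real (R t)) = (\<lambda>t. g t * cnj (g t))"
    unfolding R_def by (rule ext) (rule complex_norm_square)
  ultimately have "complex_of_real (integral {0..1} R) = Q"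
    using Qi has_integral_unique by metis
  then have "integral {0..1} R = 0" using Q0 by simp
  with Ri have R0: "(R has_integral 0) (cbox 0 1)" by simp
  have "R t = 0"
    by (rule has_integral_0_cbox_imp_0[OF _ _ R0]) (use Rc t in \<open>auto simp: R_def\<close>)
  then show ?thesis by (simp add: R_def)
qed



lemma fcoeff_sum:
  assumes J: "finite J" and F: "\<And>j. j \<in> J \<Longrightarrow> continuous_on {0..1} (F j)"
  shows "fcoeff (\<lambda>x. \<Sum>j\<in>J. a j * F j x) k = (\<Sum>j\<in>J. a j * fcoeff (F j) k)"
proof -
  have i: "(\<lambda>x. a j * (F j x * ee (-k) x)) integrable_on {0..1}" if "j \<in> J" for j
    by (intro integrable_continuous_interval continuous_intros F that)
  have "fcoeff (\<lambda>x. \<Sum>j\<in>J. a j * F j x) k = integral {0..1} (\<lambda>x. \<Sum>j\<in>J. a j * (F j x * ee (-k) x))"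
    unfolding fcoeff_ee by (simp add: sum_distrib_right mult.assoc)
  also have "\<dots> = (\<Sum>j\<in>J. integral {0..1} (\<lambda>x. a j * (F j x * ee (-k) x)))"
    by (rule integral_sum[OF J i])
  also have "\<dots> = (\<Sum>j\<in>J. a j * fcoeff (F j) k)"
    unfolding fcoeff_ee by simp
  finally show ?thesis .
qed

lemma fcoeff_diff:
  assumes "continuous_on {0..1} a" "continuous_on {0..1} b"
  shows "fcoeff (\<lambda>x. a x - b x) k = fcoeff a k - fcoeff b k"
proof -
  have "(\<lambda>x. a x * ee (-k) x) integrable_on {0..1}" "(\<lambda>x. b x * ee (-k) x) integrable_on {0..1}"
    by (intro integrable_continuous_interval continuous_intros assms)+
  then show ?thesis unfolding fcoeff_ee
    by (simp add: left_diff_distrib integral_diff)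
qed

lemma fcoeff_ee_single: "fcoeff (ee p) k = (if p = k then 1 else 0)"
proof -
  have "(\<lambda>x. ee p x * ee (-k) x) = ee (p - k)" by (rule ext) (simp add: ee_freq_add[symmetric])
  then show ?thesis unfolding fcoeff_ee using ee_integral[of "p - k"]
    by (simp add: integral_unique del: ee_zero_freq)
qed

lemma fcoeff_tpoly:
  assumes B: "finite B"
  shows "fcoeff (\<lambda>x. \<Sum>p\<in>B. a p * ee p x) k = (if k \<in> B then a k else 0)"
proof -
  have "fcoeff (\<lambda>x. \<Sum>p\<in>B. a p * ee p x) k = (\<Sum>p\<in>B. a p * fcoeff (ee p) k)"
    by (rule fcoeff_sum[OF B]) (intro continuous_intros)
  also have "\<dots> = (\<Sum>p\<in>B. if p = k then a p else 0)"
    by (intro sum.cong refl) (simp add: fcoeff_ee_single)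
  also have "\<dots> = (if k \<in> B then a k else 0)" using B by (simp only: sum.delta)
  finally show ?thesis .
qed

lemma summable_shift:
  assumes c: "(\<lambda>l. norm (c l)) summable_on UNIV"
  shows "(\<lambda>l. norm (c (l - b) * ee (-l) a)) summable_on UNIV"
proof -
  have "(\<lambda>l. norm (c (l - b))) summable_on UNIV"
    using summable_on_reindex_bij_witness[of UNIV "\<lambda>l. l + b" "\<lambda>l. l - b" UNIV "\<lambda>l. norm (c l)" "\<lambda>l. norm (c (l - b))"] c
    by auto
  then show ?thesis by (simp add: norm_mult)
qed

lemma ser_shift_mult:
  assumes c: "(\<lambda>l. norm (c l)) summable_on UNIV"
  shows "ee b (x - a) * ser c (x - a) = ser (\<lambda>l. c (l - b) * ee (-l) a) x"
proof -
  have "ee b y * ser c y = ser (\<lambda>l. c (l - b)) y" for y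
  proof -
    have "ee b y * ser c y = (\<Sum>\<^sub>\<infinity>l. c l * ee (l + b) y)"
      unfolding ser_def by (simp add: infsum_cmult_right'[symmetric] ee_freq_add algebra_simps)
    also have "\<dots> = (\<Sum>\<^sub>\<infinity>l. c (l - b) * ee l y)"
      by (rule infsum_reindex_bij_witness[of UNIV "\<lambda>l. l - b" "\<lambda>l. l + b"]) auto
    finally show ?thesis unfolding ser_def .
  qed
  also have "ser (\<lambda>l. c (l - b)) (x - a) = ser (\<lambda>l. c (l - b) * ee (-l) a) x"
    unfolding ser_def by (intro infsum_cong) (simp add: ee_arg_diff algebra_simps)
  finally show ?thesis .
qed

lemma geom_ee:
  assumes N: "N > 0"
  shows "(\<Sum>j<2*N. ee m (real j / (2 * real N))) = (if int (2*N) dvd m then of_nat (2*N) else 0)"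
proof -
  define z where "z = ee m (1 / (2 * real N))"
  have zj: "ee m (real j / (2 * real N)) = z ^ j" for j
    unfolding z_def ee_def by (simp add: exp_of_nat_mult[symmetric] algebra_simps)
  have zn: "z ^ (2*N) = 1"
  proof -
    have "z ^ (2*N) = ee m (real (2*N) / (2 * real N))" by (simp only: zj)
    also have "\<dots> = ee m (real_of_int 1)" using N by simp
    finally show ?thesis by (simp only: ee_int)
  qed
  have z1: "z = 1 \<longleftrightarrow> int (2*N) dvd m"
  proof -
    have "z = exp (complex_of_real 0 + \<i> * complex_of_real (2 * pi * real_of_int m / (2 * real N)))"
      unfolding z_def ee_def by (simp add: algebra_simps)
    also have "\<dots> = 1 \<longleftrightarrow> (\<exists>n::int. 2 * pi * real_of_int m / (2 * real N) = of_int (2 * n) * pi)"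
      by (subst exp_eq_1) simp
    also have "\<dots> \<longleftrightarrow> (\<exists>n::int. real_of_int m = real_of_int (int (2*N) * n))"
      using N by (simp add: field_simps)
    also have "\<dots> \<longleftrightarrow> int (2*N) dvd m"
      by (auto simp: dvd_def simp del: of_int_mult)
    finally show ?thesis by simp
  qed
  show ?thesis
    unfolding zj sum_gp_strict using zn z1 by auto
qed



lemma sN_ee: "sN N x = (1 / (2 * of_nat N)) * (\<Sum>b\<in>Bset N. ee b x)"
  unfolding sN_def ee_def by simp

lemma sN_frac: "sN N (frac y) = sN N y"
proof -
  have "ee b (frac y) = ee b y" for b
    using ee_arg_add[of b "frac y" "of_int (floor y)"] ee_int[of b "floor y"]
    by (simp add: frac_def)
  then show ?thesis unfolding sN_ee by simp
qed

lemma fvec_comp_zero: "fcoeff_vec f k = 0 \<Longrightarrow> fcoeff (\<lambda>x. f x $ i) k = 0"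
  unfolding fcoeff_vec_def by (metis vec_lambda_beta zero_index)

lemma f_rep:
  assumes bl: "bandlimited mm f" and x: "x \<in> {0..1}"
  shows "f x $ i = (\<Sum>p\<in>Bset mm. fcoeff (\<lambda>x. f x $ i) p * ee p x)"
proof -
  have fc: "continuous_on UNIV f" and fp: "\<And>x. f (x + 1) = f x"
    and fz: "\<And>k. k \<notin> Bset mm \<Longrightarrow> fcoeff_vec f k = 0"
    using bl unfolding bandlimited_def by auto
  have fin: "finite (Bset mm)" unfolding Bset_def by simp
  define g where "g = (\<lambda>x. f x $ i - (\<Sum>p\<in>Bset mm. fcoeff (\<lambda>x. f x $ i) p * ee p x))"
  have c1: "continuous_on {0..1} (\<lambda>x. f x $ i)"
    by (intro continuous_intros continuous_on_subset[OF fc]) auto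
  have c2: "continuous_on {0..1} (\<lambda>x. \<Sum>p\<in>Bset mm. fcoeff (\<lambda>x. f x $ i) p * ee p x)"
    by (intro continuous_intros)
  have gc: "continuous_on {0..1} g" unfolding g_def by (intro continuous_on_diff c1 c2)
  have "ee p 1 = ee p 0" for p using ee_int[of p 1] ee_int[of p 0] by simp
  moreover have "f 1 = f 0" using fp[of 0] by simp
  ultimately have g01: "g 0 = g 1" unfolding g_def by simp
  have gz: "fcoeff g k = 0" for k
  proof -
    have "fcoeff g k = fcoeff (\<lambda>x. f x $ i) k - (if k \<in> Bset mm then fcoeff (\<lambda>x. f x $ i) k else 0)"
      unfolding g_def fcoeff_diff[OF c1 c2] fcoeff_tpoly[OF fin] ..
    then show ?thesis using fvec_comp_zero[OF fz[of k]] by (cases "k \<in> Bset mm") auto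
  qed
  show ?thesis using fourier_unique[OF gc g01 gz x] unfolding g_def by simp
qed

lemma phi_ser:
  assumes pc: "continuous_on {0..1} phi" and p0: "phi 0 = 1" and p1: "phi 1 = 1"
    and cs: "(\<lambda>k. norm (fcoeff phi k)) summable_on UNIV"
    and y: "y \<in> {0..1}"
  shows "phi y = ser (fcoeff phi) y"
proof -
  define g where "g = (\<lambda>y. phi y - ser (fcoeff phi) y)"
  have sc: "continuous_on {0..1} (ser (fcoeff phi))"
    by (rule continuous_on_subset[OF ser_continuous[OF cs]]) auto
  have gc: "continuous_on {0..1} g" unfolding g_def by (intro continuous_on_diff pc sc)
  have "ser (fcoeff phi) 1 = ser (fcoeff phi) 0" using ser_periodic[of _ 0 1] by simp
  then have g01: "g 0 = g 1" unfolding g_def using p0 p1 by simp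
  have gz: "fcoeff g k = 0" for k
    unfolding g_def fcoeff_diff[OF pc sc] ser_fcoeff[OF cs] by simp
  show ?thesis using fourier_unique[OF gc g01 gz y] unfolding g_def by simp
qed

lemma sum_fcoeff_phi:
  assumes pc: "continuous_on {0..1} phi" and p0: "phi 0 = 1" and p1: "phi 1 = 1"
    and cs: "(\<lambda>k. norm (fcoeff phi k)) summable_on UNIV"
  shows "(\<Sum>\<^sub>\<infinity>l. fcoeff phi l) = 1"
  using phi_ser[OF pc p0 p1 cs, of 0] p0 unfolding ser_def by (simp add: ee_def)

lemma one_minus_mu:
  assumes pc: "continuous_on {0..1} phi" and p0: "phi 0 = 1" and p1: "phi 1 = 1"
    and cs: "(\<lambda>k. norm (fcoeff phi k)) summable_on UNIV"
  shows "1 - mu phi N k = nu phi N k"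
proof -
  have fin: "finite ((\<lambda>b. k - b) ` Bset N)" unfolding Bset_def by simp
  have "(\<Sum>\<^sub>\<infinity>l. fcoeff phi l) = mu phi N k + nu phi N k"
    unfolding mu_def nu_def
    by (rule infsum_split_finite[OF abs_summable_summable[OF cs] fin])
  then show ?thesis using sum_fcoeff_phi[OF assms] by (metis add_diff_cancel_left')
qed



lemma fcoeff_cmult: "fcoeff (\<lambda>x. a * F x) k = a * fcoeff F k"
  unfolding fcoeff_ee by (simp add: mult.assoc)

lemma fcoeff_sum':
  assumes J: "finite J" and G: "\<And>j. j \<in> J \<Longrightarrow> continuous_on {0..1} (G j)"
  shows "fcoeff (\<lambda>x. \<Sum>j\<in>J. G j x) k = (\<Sum>j\<in>J. fcoeff (G j) k)"
  using fcoeff_sum[OF J G, where a = "\<lambda>_. 1" and k = k] by simp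

lemma mu_eq: "mu phi N k = (\<Sum>b\<in>Bset N. fcoeff phi (k - b))"
  unfolding mu_def by (subst sum.reindex) (auto simp: inj_on_def)

lemma Rphi_comp:
  assumes pc: "continuous_on {0..1} phi" and p0: "phi 0 = 1" and p1: "phi 1 = 1"
    and cs: "(\<lambda>k. norm (fcoeff phi k)) summable_on UNIV"
  shows "Rphi phi N f x $ i = (\<Sum>j<2*N. \<Sum>b\<in>Bset N.
            (f (real j / (2 * real N)) $ i / (2 * of_nat N)) *
            ser (\<lambda>l. fcoeff phi (l - b) * ee (-l) (real j / (2 * real N))) x)"
proof -
  define c where "c = fcoeff phi"
  have T: "sN N (frac (x - a)) * phi (frac (x - a))
      = (\<Sum>b\<in>Bset N. ser (\<lambda>l. c (l - b) * ee (-l) a) x) / (2 * of_nat N)" for a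
  proof -
    let ?y = "x - a"
    have fr: "frac ?y \<in> {0..1}" using frac_lt_1[of ?y] frac_ge_0[of ?y] by simp
    have "phi (frac ?y) = ser c (frac ?y)" unfolding c_def by (rule phi_ser[OF pc p0 p1 cs fr])
    also have "\<dots> = ser c (frac ?y + of_int (floor ?y))" by (simp only: ser_periodic)
    also have "\<dots> = ser c ?y" by (simp add: frac_def)
    finally have ph: "phi (frac ?y) = ser c ?y" .
    have "sN N (frac ?y) * phi (frac ?y) = sN N ?y * ser c ?y" by (simp only: sN_frac ph)
    also have "\<dots> = (\<Sum>b\<in>Bset N. ee b ?y * ser c ?y) / (2 * of_nat N)"
      unfolding sN_ee by (simp add: sum_distrib_right)
    also have "\<dots> = (\<Sum>b\<in>Bset N. ser (\<lambda>l. c (l - b) * ee (-l) a) x) / (2 * of_nat N)"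
      using ser_shift_mult[OF cs[folded c_def]] by simp
    finally show ?thesis .
  qed
  show ?thesis
    unfolding Rphi_def sum_component vector_smult_component T c_def
    by (simp add: sum_distrib_left sum_divide_distrib mult.commute)
qed

lemma fcoeff_Rphi:
  assumes pc: "continuous_on {0..1} phi" and p0: "phi 0 = 1" and p1: "phi 1 = 1"
    and cs: "(\<lambda>k. norm (fcoeff phi k)) summable_on UNIV"
    and N: "N > 0" and bl: "bandlimited mm f"
  shows "fcoeff (\<lambda>x. Rphi phi N f x $ i) k = mu phi N k *
     (\<Sum>p\<in>Bset mm. fcoeff (\<lambda>x. f x $ i) p * (if int (2*N) dvd (p - k) then 1 else 0))"
proof -
  define c where "c = fcoeff phi"
  define xj where "xj = (\<lambda>j::nat. real j / (2 * real N))"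
  define fh where "fh = fcoeff (\<lambda>x. f x $ i)"
  define A where "A = (\<lambda>j. f (xj j) $ i / (2 * of_nat N))"
  define S where "S = (\<lambda>j b. ser (\<lambda>l. c (l - b) * ee (-l) (xj j)))"
  have Sc: "continuous_on {0..1} (S j b)" for j b
    unfolding S_def c_def by (rule continuous_on_subset[OF ser_continuous[OF summable_shift[OF cs]]]) auto
  have fin: "finite (Bset N)" "finite (Bset mm)" unfolding Bset_def by auto
  have "fcoeff (\<lambda>x. Rphi phi N f x $ i) k = fcoeff (\<lambda>x. \<Sum>j<2*N. \<Sum>b\<in>Bset N. A j * S j b x) k"
    unfolding Rphi_comp[OF pc p0 p1 cs] A_def S_def xj_def c_def ..
  also have "\<dots> = (\<Sum>j<2*N. fcoeff (\<lambda>x. \<Sum>b\<in>Bset N. A j * S j b x) k)"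
    by (rule fcoeff_sum') (auto intro!: continuous_intros Sc)
  also have "\<dots> = (\<Sum>j<2*N. \<Sum>b\<in>Bset N. A j * fcoeff (S j b) k)"
    by (intro sum.cong refl fcoeff_sum fin Sc)
  also have "\<dots> = (\<Sum>j<2*N. \<Sum>b\<in>Bset N. A j * (c (k - b) * ee (-k) (xj j)))"
    unfolding S_def c_def by (simp add: ser_fcoeff[OF summable_shift[OF cs]])
  also have "\<dots> = (\<Sum>j<2*N. f (xj j) $ i * ee (-k) (xj j)) * mu phi N k / (2 * of_nat N)"
    unfolding mu_eq A_def c_def
    by (simp add: sum_distrib_left sum_distrib_right sum_divide_distrib algebra_simps)
  also have "(\<Sum>j<2*N. f (xj j) $ i * ee (-k) (xj j))
      = (\<Sum>j<2*N. \<Sum>p\<in>Bset mm. fh p * ee (p - k) (xj j))"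
  proof (intro sum.cong refl)
    fix j assume "j \<in> {..<2*N}"
    then have "xj j \<in> {0..1}" unfolding xj_def using N by (auto simp: field_simps)
    then have "f (xj j) $ i = (\<Sum>p\<in>Bset mm. fh p * ee p (xj j))"
      unfolding fh_def by (rule f_rep[OF bl])
    then show "f (xj j) $ i * ee (-k) (xj j) = (\<Sum>p\<in>Bset mm. fh p * ee (p - k) (xj j))"
      by (simp add: sum_distrib_right ee_freq_add[of _ "-k", symmetric] mult.assoc)
  qed
  also have "\<dots> = (\<Sum>p\<in>Bset mm. fh p * (\<Sum>j<2*N. ee (p - k) (xj j)))"
    by (simp add: sum.swap[of _ "{..<2*N}"] sum_distrib_left)
  also have "\<dots> = (\<Sum>p\<in>Bset mm. fh p * (if int (2*N) dvd (p - k) then of_nat (2*N) else 0))"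
    unfolding xj_def geom_ee[OF N] ..
  finally have X: "fcoeff (\<lambda>x. Rphi phi N f x $ i) k = (\<Sum>p\<in>Bset mm. fh p * (if int (2*N) dvd (p - k) then of_nat (2*N) else 0)) * mu phi N k / (2 * of_nat N)" .
  have Y: "(\<Sum>p\<in>Bset mm. fh p * (if int (2*N) dvd (p - k) then of_nat (2*N) else 0)) * mu phi N k / (2 * of_nat N)
     = mu phi N k * (\<Sum>p\<in>Bset mm. fh p * (if int (2*N) dvd (p - k) then 1 else 0))"
    unfolding sum_distrib_left sum_distrib_right sum_divide_distrib
    by (intro sum.cong refl) (use N in auto)
  from trans[OF X Y] show ?thesis by (simp only: fh_def)
qed



lemma Bset_mem: "p \<in> Bset m \<longleftrightarrow> - int m \<le> p \<and> p < int m"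
  unfolding Bset_def by auto

lemma collapse:
  fixes a :: "int \<Rightarrow> complex"
  assumes mN: "mm \<le> N" and p0: "p0 \<in> Bset mm" and d0: "int (2*N) dvd (p0 - k)"
  shows "(\<Sum>p\<in>Bset mm. a p * (if int (2*N) dvd (p - k) then 1 else 0)) = a p0"
proof -
  have "(\<Sum>p\<in>Bset mm. a p * (if int (2*N) dvd (p - k) then 1 else 0))
      = (\<Sum>p\<in>Bset mm. if p = p0 then a p else 0)"
  proof (intro sum.cong refl)
    fix p assume p: "p \<in> Bset mm"
    have "p = p0" if d: "int (2*N) dvd (p - k)"
    proof (rule ccontr)
      assume ne: "p \<noteq> p0"
      have "int (2*N) dvd (p - p0)" using dvd_diff[OF d d0] by simp
      from dvd_imp_le_int[OF _ this] ne have le: "\<bar>int (2*N)\<bar> \<le> \<bar>p - p0\<bar>" by simp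
      have "p - p0 < int (2*N)" "p0 - p < int (2*N)" using p p0 mN unfolding Bset_mem by linarith+
      then have "\<bar>p - p0\<bar> < \<bar>int (2*N)\<bar>" by (simp only: abs_less_iff abs_of_nat) auto
      with le show False by linarith
    qed
    then show "a p * (if int (2*N) dvd (p - k) then 1 else 0) = (if p = p0 then a p else 0)"
    proof (cases "int (2*N) dvd (p - k)")
      case True
      with \<open>int (2*N) dvd (p - k) \<Longrightarrow> p = p0\<close> show ?thesis by simp
    next
      case False
      then have "p \<noteq> p0" using d0 by blast
      with False show ?thesis by simp
    qed
  qed
  also have "\<dots> = a p0" using p0 by (simp add: Bset_def)
  finally show ?thesis .
qed

lemma no_collapse:
  fixes a :: "int \<Rightarrow> complex"
  assumes "\<forall>p\<in>Bset mm. \<not> int (2*N) dvd (p - k)"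
  shows "(\<Sum>p\<in>Bset mm. a p * (if int (2*N) dvd (p - k) then 1 else 0)) = 0"
  using assms by (intro sum.neutral ballI) (simp del: of_nat_mult)



lemma fvec_sub_comp:
  "(fcoeff_vec f k - fcoeff_vec g k) $ i = fcoeff (\<lambda>x. f x $ i) k - fcoeff (\<lambda>x. g x $ i) k"
  unfolding fcoeff_vec_def by simp

theorem lemma4p1:
  fixes phi :: "real \<Rightarrow> complex" and f :: "real \<Rightarrow> complex ^ 'm"
    and mm N :: nat
  assumes "continuous_on {0..1} phi" and "phi 0 = 1" and "phi 1 = 1"
    and "(\<lambda>k. norm (fcoeff phi k)) summable_on UNIV"
    and "N \<ge> mm"
    and "bandlimited mm f"
  shows "\<forall>k::int.
     (k \<in> Bset mm \<longrightarrow>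
        fcoeff_vec f k - fcoeff_vec (Rphi phi N f) k = nu phi N k *s fcoeff_vec f k)
   \<and> (\<forall>l::int. l \<noteq> 0 \<and> k - 2 * l * int N \<in> Bset mm \<longrightarrow>
        fcoeff_vec f k - fcoeff_vec (Rphi phi N f) k = - (mu phi N k *s fcoeff_vec f (k - 2 * l * int N)))
   \<and> (k \<notin> Bset mm \<and> \<not> (\<exists>l::int. l \<noteq> 0 \<and> k - 2 * l * int N \<in> Bset mm) \<longrightarrow>
        fcoeff_vec f k - fcoeff_vec (Rphi phi N f) k = 0)"
proof -
  note pc = assms(1) and p0 = assms(2) and p1 = assms(3) and cs = assms(4)
    and mN = assms(5) and bl = assms(6)
  have fz: "\<And>k. k \<notin> Bset mm \<Longrightarrow> fcoeff_vec f k = 0"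
    using bl unfolding bandlimited_def by auto
  show ?thesis
  proof (cases "N = 0")
    case True
    then have mm0: "Bset mm = {}" using mN by (simp add: Bset_def)
    have R0: "Rphi phi N f = (\<lambda>x. 0)" unfolding Rphi_def using True by (simp add: fun_eq_iff)
    have "fcoeff_vec (\<lambda>x. 0 :: complex ^ 'm) k = 0" for k
      unfolding fcoeff_vec_def fcoeff_def by (simp add: vec_eq_iff)
    then show ?thesis using fz mm0 R0 by simp
  next
    case False
    then have N: "N > 0" by simp
    show ?thesis
    proof (intro allI conjI impI)
      fix k :: int
      define S where "S = (\<lambda>i. \<Sum>p\<in>Bset mm. fcoeff (\<lambda>x. f x $ i) p * (if int (2*N) dvd (p - k) then 1 else 0))"
      have D: "(fcoeff_vec f k - fcoeff_vec (Rphi phi N f) k) $ i = fcoeff (\<lambda>x. f x $ i) k - mu phi N k * S i" for i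
        unfolding fvec_sub_comp fcoeff_Rphi[OF pc p0 p1 cs N bl] S_def ..
      {
        assume k: "k \<in> Bset mm"
        have "S i = fcoeff (\<lambda>x. f x $ i) k" for i
          unfolding S_def by (rule collapse[OF mN k]) simp
        then show "fcoeff_vec f k - fcoeff_vec (Rphi phi N f) k = nu phi N k *s fcoeff_vec f k"
          unfolding vec_eq_iff D one_minus_mu[OF pc p0 p1 cs, symmetric]
          by (simp add: fcoeff_vec_def algebra_simps)
      next
        fix l :: int assume l: "l \<noteq> 0 \<and> k - 2 * l * int N \<in> Bset mm"
        define p0 where "p0 = k - 2 * l * int N"
        have p0B: "p0 \<in> Bset mm" using l p0_def by simp
        have d0: "int (2*N) dvd (p0 - k)" unfolding p0_def by (simp add: dvd_def) (metis mult.commute minus_mult_left mult.assoc)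
        have Si: "S i = fcoeff (\<lambda>x. f x $ i) p0" for i
          unfolding S_def by (rule collapse[OF mN p0B d0])
        have kB: "k \<notin> Bset mm"
        proof
          assume k: "k \<in> Bset mm"
          have "\<bar>l\<bar> \<ge> 1" using l by arith
          then have "\<bar>l\<bar> * int N \<ge> 1 * int N" by (intro mult_right_mono) auto
          then have "\<bar>2 * l * int N\<bar> \<ge> 2 * int N" by (simp add: abs_mult)
          moreover have "k - p0 < 2 * int N" "p0 - k < 2 * int N"
            using k p0B mN unfolding Bset_mem by linarith+
          moreover have "k - p0 = 2 * l * int N" unfolding p0_def by simp
          ultimately show False by (simp only: abs_if) (auto split: if_splits)
        qed
        have "fcoeff (\<lambda>x. f x $ i) k = 0" for i using fvec_comp_zero[OF fz[OF kB]] .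
        then show "fcoeff_vec f k - fcoeff_vec (Rphi phi N f) k = - (mu phi N k *s fcoeff_vec f (k - 2 * l * int N))"
          unfolding vec_eq_iff D using Si by (simp add: fcoeff_vec_def p0_def)
      next
        assume h: "k \<notin> Bset mm \<and> \<not> (\<exists>l::int. l \<noteq> 0 \<and> k - 2 * l * int N \<in> Bset mm)"
        have nd: "\<forall>p\<in>Bset mm. \<not> int (2*N) dvd (p - k)"
        proof (intro ballI notI)
          fix p assume p: "p \<in> Bset mm" and d: "int (2*N) dvd (p - k)"
          then obtain q where q: "p - k = int (2*N) * q" by (auto simp: dvd_def)
          then have pk: "p = k - 2 * (-q) * int N" by (simp add: algebra_simps)
          show False
          proof (cases "q = 0")
            case True then show False using pk p h by simp
          next
            case False then show False using pk p h by (metis neg_equal_0_iff_equal)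
          qed
        qed
        have "S i = 0" for i unfolding S_def by (rule no_collapse[OF nd])
        moreover have "fcoeff (\<lambda>x. f x $ i) k = 0" for i using fvec_comp_zero[OF fz] h by blast
        ultimately show "fcoeff_vec f k - fcoeff_vec (Rphi phi N f) k = 0"
          unfolding vec_eq_iff D by simp
      }
    qed
  qed
qed


end
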